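(* Fix integers $q\ge2$, $L\ge1$, a real $r\in[0,\frac{L}{L+1})$ and a real $\varepsilon>0$. Then there is a function $\delta:\mathbb{N}\to\mathbb{R}$ with $\delta(n)\to0$ as $n\to\infty$ such that, for every $n$ with $rn\in\mathbb{N}$, if there exists an $(r,L)$ list-decodable code $C\subseteq[q]^n$ of rate at least $1-r-\varepsilon$ (i.e. $|C|\ge q^{(1-r-\varepsilon)n}$), then $L\ge \frac{r}{\varepsilon}+\delta(n)$.
   Context: $[q]=\{1,\dots,q\}$. A code is a subset $C\subseteq[q]^n$, of rate $\log_q(|C|)/n$. $B_t(v)$ is the Hamming ball of radius $t$ around $v\in[q]^n$. $C$ is $(r,L)$ list-decodable if $|B_{rn}(v)\cap C|\le L$ for all $v\in[q]^n$. *)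

theory Defs
  imports Complex_Main
begin

definition words :: "nat \<Rightarrow> nat \<Rightarrow> nat list set" where
  "words q n = {v. length v = n \<and> set v \<subseteq> {1..q}}"

definition hamming :: "nat list \<Rightarrow> nat list \<Rightarrow> nat" where
  "hamming u v = card {i. i < length u \<and> u ! i \<noteq> v ! i}"

definition hamming_ball :: "nat \<Rightarrow> nat \<Rightarrow> real \<Rightarrow> nat list \<Rightarrow> nat list set" where
  "hamming_ball q n t v = {w \<in> words q n. real (hamming v w) \<le> t}"

definition list_decodable :: "nat \<Rightarrow> nat \<Rightarrow> real \<Rightarrow> nat \<Rightarrow> nat list set \<Rightarrow> bool" where
  "list_decodable q n r L C \<longleftrightarrow>
     (\<forall>v \<in> words q n. card (hamming_ball q n (r * real n) v \<inter> C) \<le> L)"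

end

theory Submission imports Defs begin

lemma words_finite: "finite (words q n)"
proof -
  have "words q n = {xs. set xs \<subseteq> {1..q} \<and> length xs = n}" unfolding words_def by auto
  thus ?thesis using finite_lists_length_eq[of "{1..q}" n] by simp
qed

lemma words_card: "card (words q n) = q ^ n"
proof -
  have "words q n = {xs. set xs \<subseteq> {1..q} \<and> length xs = n}" unfolding words_def by auto
  thus ?thesis using card_lists_length_eq[of "{1..q}" n] by simp
qed

lemma comb:
  fixes q n t L :: nat and r :: real and C :: "nat list set"
  assumes C: "C \<subseteq> words q n" and ld: "list_decodable q n r L C" and tn: "t \<le> n"
    and big: "L * q^t < card C"
  shows "real (L+1) * (r * real n) < real L * (real (n - t) + 1)"
proof (rule ccontr)
  assume neg: "\<not> ?thesis"
  have finC: "finite C" using C words_finite finite_subset by blast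
  have "\<exists>p \<in> words q t. L < card {w\<in>C. take t w = p}"
  proof (rule ccontr)
    assume "\<not> (\<exists>p \<in> words q t. L < card {w\<in>C. take t w = p})"
    then have le: "\<forall>p\<in>words q t. card {w\<in>C. take t w = p} \<le> L" by auto
    have "C = (\<Union>p\<in>words q t. {w\<in>C. take t w = p})"
    proof -
      have "take t w \<in> words q t" if "w \<in> C" for w
        using that C tn set_take_subset[of t w] unfolding words_def by auto
      thus ?thesis by auto
    qed
    then have "card C \<le> (\<Sum>p\<in>words q t. card {w\<in>C. take t w = p})"
      using card_UN_le[OF words_finite] by metis
    also have "\<dots> \<le> card (words q t) * L" using sum_bounded_above[of "words q t" "\<lambda>p. card {w\<in>C. take t w = p}" L] le by simp
    also have "\<dots> = L * q^t" using words_card by simp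
    finally show False using big by simp
  qed
  then obtain p where pw: "p \<in> words q t" and cardF: "L < card {w\<in>C. take t w = p}" by blast
  obtain F' where F'sub: "F' \<subseteq> {w\<in>C. take t w = p}" and cF': "card F' = L+1" and finF': "finite F'"
    using obtain_subset_with_card_n[of "L+1" "{w\<in>C. take t w = p}"] cardF by auto
  obtain h where hb: "bij_betw h {0..<L+1} F'" using ex_bij_betw_nat_finite[OF finF'] cF' by auto
  have hC: "h j \<in> C" and hp: "take t (h j) = p" if "j < L+1" for j
  proof -
    have "h j \<in> F'" using hb that unfolding bij_betw_def by auto
    thus "h j \<in> C" "take t (h j) = p" using F'sub by auto
  qed
  have hw: "h j \<in> words q n" if "j < L+1" for j using hC[OF that] C by auto
  define m where "m = n - t"
  define b where "b = m div (L+1)"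
  define J where "J = (\<lambda>k. if k < (L+1)*b then k div b else 0)"
  define J' where "J' = (\<lambda>i. if i < t then 0 else J (i - t))"
  define v where "v = map (\<lambda>i. h (J' i) ! i) [0..<n]"
  have J'lt: "J' i < L+1" for i
  proof -
    have "J k < L+1" for k
    proof (cases "k < (L+1)*b")
      case True
      then have "b > 0" by (cases "b = 0") auto
      then show ?thesis using True unfolding J_def by (simp add: div_less_iff_less_mult mult.commute)
    qed (simp add: J_def)
    thus ?thesis unfolding J'_def by simp
  qed
  have lenv: "length v = n" unfolding v_def by simp
  have vnth: "v ! i = h (J' i) ! i" if "i < n" for i unfolding v_def using that by simp
  have vw: "v \<in> words q n"
  proof -
    have "v ! i \<in> {1..q}" if "i < n" for i
    proof -
      have "h (J' i) \<in> words q n" using hw J'lt by blast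
      then have "h (J' i) ! i \<in> set (h (J' i))" "set (h (J' i)) \<subseteq> {1..q}"
        using that unfolding words_def by auto
      thus ?thesis using vnth[OF that] by auto
    qed
    thus ?thesis using lenv unfolding words_def by (auto simp: in_set_conv_nth)
  qed
  have bm: "(L+1)*b \<le> m" unfolding b_def by (metis div_times_less_eq_dividend mult.commute)
  have ham: "hamming v (h j) \<le> m - b" if j: "j < L+1" for j
  proof -
    have sub: "{i. i < length v \<and> v!i \<noteq> h j ! i} \<subseteq> {t..<n} - {t+j*b..<t+j*b+b}"
    proof
      fix i assume "i \<in> {i. i < length v \<and> v!i \<noteq> h j ! i}"
      then have i: "i < n" and ne: "v!i \<noteq> h j ! i" using lenv by auto
      have it: "\<not> i < t"
      proof
        assume "i < t"
        then have "v ! i = h 0 ! i" using vnth[OF i] unfolding J'_def by simp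
        also have "\<dots> = take t (h 0) ! i" using \<open>i < t\<close> by simp
        also have "\<dots> = take t (h j) ! i" using hp[of 0] hp[OF j] by simp
        also have "\<dots> = h j ! i" using \<open>i < t\<close> by simp
        finally show False using ne by simp
      qed
      have "\<not> (t+j*b \<le> i \<and> i < t+j*b+b)"
      proof
        assume a: "t+j*b \<le> i \<and> i < t+j*b+b"
        define k where "k = i - t"
        have k1: "b*j \<le> k" and k2: "k < b * Suc j" using a it unfolding k_def by (auto simp: mult.commute)
        have "k div b = j" using div_nat_eqI[OF k1 k2] .
        moreover have "k < (L+1)*b"
        proof -
          have "b * Suc j \<le> b*(L+1)" using j by (intro mult_le_mono2) simp
          thus ?thesis using k2 by (metis less_le_trans mult.commute)
        qed
        ultimately have "J' i = j" unfolding J'_def J_def k_def using it by simp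
        thus False using vnth[OF i] ne by simp
      qed
      thus "i \<in> {t..<n} - {t+j*b..<t+j*b+b}" using i it by auto
    qed
    have "t+j*b+b \<le> n"
    proof -
      have "j*b+b \<le> (L+1)*b" using j by (metis Suc_eq_plus1 Suc_leI add.commute mult_Suc mult_le_mono1)
      thus ?thesis using bm tn unfolding m_def by linarith
    qed
    then have "{t+j*b..<t+j*b+b} \<subseteq> {t..<n}" by auto
    then have "card ({t..<n} - {t+j*b..<t+j*b+b}) = (n - t) - b"
      by (simp add: card_Diff_subset)
    then have "card {i. i < length v \<and> v!i \<noteq> h j ! i} \<le> (n-t) - b"
      using card_mono[OF _ sub] by (metis finite_Diff finite_atLeastLessThan)
    thus ?thesis unfolding hamming_def m_def by simp
  qed
  have mb: "m \<le> (L+1)*b + L"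
  proof -
    have "m mod (L+1) \<le> L" by (metis Suc_eq_plus1 less_Suc_eq_le mod_less_divisor zero_less_Suc)
    moreover have "m = (L+1)*b + m mod (L+1)" unfolding b_def by (metis div_mult_mod_eq mult.commute)
    ultimately show ?thesis by linarith
  qed
  have bound: "real (m - b) * real (L+1) \<le> real L * (real m + 1)"
  proof -
    have "(m - b) * (L+1) \<le> L * (m + 1)" using mb bm
      by (simp add: algebra_simps diff_mult_distrib)
    then have "real ((m - b) * (L+1)) \<le> real (L * (m + 1))" by (rule of_nat_mono)
    thus ?thesis by (simp only: of_nat_mult of_nat_add of_nat_1)
  qed
  have inball: "h j \<in> hamming_ball q n (r * real n) v \<inter> C" if j: "j < L+1" for j
  proof -
    have "real (hamming v (h j)) * real (L+1) \<le> real (m-b) * real (L+1)"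
      using ham[OF j] by (simp add: mult_right_mono)
    also have "\<dots> \<le> real L * (real m + 1)" by (rule bound)
    also have "\<dots> \<le> real (L+1) * (r * real n)" using neg unfolding m_def by simp
    finally have "real (hamming v (h j)) \<le> r * real n"
      by (simp add: mult.commute)
    thus ?thesis unfolding hamming_ball_def using hw[OF j] hC[OF j] by auto
  qed
  have "F' \<subseteq> hamming_ball q n (r * real n) v \<inter> C"
    using inball hb unfolding bij_betw_def by auto
  then have "L + 1 \<le> card (hamming_ball q n (r * real n) v \<inter> C)"
    using cF' card_mono finC by (metis finite_Int)
  moreover have "card (hamming_ball q n (r * real n) v \<inter> C) \<le> L"
    using ld vw unfolding list_decodable_def by auto
  ultimately show False by simp
qed


lemma key:
  fixes q L n :: nat and r \<epsilon> :: real and C :: "nat list set"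
  assumes q: "q \<ge> 2" and L: "L \<ge> 1" and r0: "0 \<le> r" and rL: "r < real L / (real L + 1)"
    and e: "\<epsilon> > 0" and C: "C \<subseteq> words q n" and ld: "list_decodable q n r L C"
    and cC: "real (card C) \<ge> real q powr ((1 - r - \<epsilon>) * real n)"
  shows "r * real n \<le> real L * \<epsilon> * real n + real L * (log (real q) (real L) + 2)"
proof -
  define A where "A = (1 - r - \<epsilon>) * real n - log (real q) (real L)"
  have rL': "r * (real L + 1) < real L" using rL by (simp add: field_simps)
  have lg: "log (real q) (real L) \<ge> 0" using q L by simp
  have LA: "(real L - r * (real L + 1)) * real n \<ge> 0" using rL' by simp
  show ?thesis
  proof (cases "A \<le> 0")
    case True
    have "real L * A \<le> 0" using True by (simp add: mult_nonneg_nonpos)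
    then show ?thesis using LA lg L unfolding A_def by (simp add: algebra_simps)
  next
    case False
    define t where "t = nat (ceiling A - 1)"
    have c1: "ceiling A \<ge> 1" using False by (simp add: not_le)
    have tA: "real t = real_of_int (ceiling A) - 1" unfolding t_def using c1 by simp
    have t1: "real t < A" and t2: "A \<le> real t + 1" using tA ceiling_correct[of A] by linarith+
    have An: "A \<le> real n"
    proof -
      have "(1 - r - \<epsilon>) * real n \<le> real n" 
      proof -
        have "(r + \<epsilon>) * real n \<ge> 0" using r0 e by simp
        thus ?thesis by (simp add: algebra_simps)
      qed
      thus ?thesis unfolding A_def using lg by linarith
    qed
    have tn: "t \<le> n" using t1 An by linarith
    have qpos: "real q > 1" using q by simp
    have "real L * real q ^ t = real L * real q powr real t" using qpos by (simp add: powr_realpow)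
    also have "\<dots> < real L * real q powr A" using L qpos t1 by (simp add: powr_less_mono)
    also have "real q powr A = real q powr ((1 - r - \<epsilon>) * real n) / real q powr (log (real q) (real L))"
      unfolding A_def by (rule powr_diff)
    also have "real q powr (log (real q) (real L)) = real L" using qpos L by simp
    finally have "real L * real q ^ t < real (card C)" using L cC by simp
    then have big: "L * q ^ t < card C" by (metis of_nat_less_iff of_nat_mult of_nat_power)
    have cb: "real (L+1) * (r * real n) < real L * (real (n - t) + 1)" by (rule comb[OF C ld tn big])
    have "real L * (real (n - t) + 1) \<le> real L * (real n - A + 2)"
      using tn t2 by (intro mult_left_mono) (auto simp: of_nat_diff)
    then show ?thesis using cb unfolding A_def by (simp add: algebra_simps)
  qed
qed

theorem proposition3p4:
  fixes q L :: nat and r \<epsilon> :: real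
  assumes "q \<ge> 2" and "L \<ge> 1"
    and "0 \<le> r" and "r < real L / (real L + 1)"
    and "\<epsilon> > 0"
  shows "\<exists>\<delta> :: nat \<Rightarrow> real. \<delta> \<longlonglongrightarrow> 0 \<and>
    (\<forall>n :: nat. (\<exists>k :: nat. r * real n = real k) \<longrightarrow>
       (\<forall>C. C \<subseteq> words q n \<and> list_decodable q n r L C
            \<and> real (card C) \<ge> real q powr ((1 - r - \<epsilon>) * real n)
          \<longrightarrow> real L \<ge> r / \<epsilon> + \<delta> n))"
proof -
  define D where "D = real L * (log (real q) (real L) + 2) / \<epsilon>"
  define \<delta> where "\<delta> = (\<lambda>n::nat. if n = 0 then - r / \<epsilon> else - D / real n)"
  have lim: "\<delta> \<longlonglongrightarrow> 0"
  proof (rule Lim_transform_eventually)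
    show "(\<lambda>n. - D / real n) \<longlonglongrightarrow> 0" using lim_const_over_n[of "-D"] by simp
    show "\<forall>\<^sub>F n in sequentially. - D / real n = \<delta> n"
      unfolding \<delta>_def eventually_sequentially by (rule exI[of _ 1]) auto
  qed
  have main: "real L \<ge> r / \<epsilon> + \<delta> n"
    if C: "C \<subseteq> words q n" and ld: "list_decodable q n r L C"
      and cC: "real (card C) \<ge> real q powr ((1 - r - \<epsilon>) * real n)" for n C
  proof (cases "n = 0")
    case True
    thus ?thesis unfolding \<delta>_def by simp
  next
    case False
    have k: "r * real n \<le> real L * \<epsilon> * real n + real L * (log (real q) (real L) + 2)"
      by (rule key[OF assms C ld cC])
    have np: "real n > 0" using False by simp
    have "r / \<epsilon> - D / real n \<le> real L"
    proof -
      have "(r / \<epsilon> - D / real n) * (\<epsilon> * real n) = r * real n - real L * (log (real q) (real L) + 2)"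
        using np assms(5) unfolding D_def by (simp add: field_simps)
      also have "\<dots> \<le> real L * (\<epsilon> * real n)" using k by (simp add: algebra_simps)
      finally show ?thesis using np assms(5) by (simp add: mult_le_cancel_right)
    qed
    thus ?thesis unfolding \<delta>_def using False by simp
  qed
  show ?thesis using lim main by blast
qed

end
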